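(* Let $m,v,x>0$, $w\geq 0$ and $u\in\mathbb{R}$. Let $\mathfrak{n}$ be the five-dimensional real Lie algebra with basis $\{E_1,\dots,E_5\}$ whose only non-vanishing brackets (up to antisymmetry) are $$[E_1,E_2]=mE_3+uE_5,\qquad [E_1,E_3]=vE_4+wE_5,\qquad [E_1,E_4]=xE_5.$$ Equip the corresponding simply connected nilpotent Lie group with the left-invariant Riemannian metric for which $\{E_1,\dots,E_5\}$ is orthonormal. Then this metric is an algebraic Ricci soliton if and only if $$x=m,\qquad u=w=0,\qquad v=\tfrac{2}{\sqrt3}m.$$ In that case $$c=-2m^2,\qquad D=\mathrm{diag}\big(\tfrac13m^2,\tfrac32m^2,\tfrac{11}6m^2,\tfrac{13}6m^2,\tfrac52m^2\big),$$ where $D$ is written as a matrix with respect to the basis $\{E_1,\dots,E_5\}$.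
   Context: Let $G$ be a Lie group with Lie algebra $\mathfrak{g}$ and let $g$ be a left-invariant Riemannian metric on $G$. Let $\mathrm{Ric}$ denote the $(1,1)$ Ricci tensor of $g$, viewed as a linear endomorphism of $\mathfrak{g}$. The metric $g$ is an algebraic Ricci soliton if there are a real number $c$ and a derivation $D$ of $\mathfrak{g}$ such that $\mathrm{Ric}=c\,\mathrm{Id}+D$. The notation $\mathrm{diag}(a_1,\dots,a_5)$ denotes the diagonal matrix with these entries. *)

theory Defs
  imports "HOL-Analysis.Analysis" "HOL-Library.Numeral_Type"
begin

text \<open>A real Lie algebra structure on real^'n is given by its bracket br.
  The left-invariant metric is the one for which the standard basis
  (axis i 1) is orthonormal, i.e. the standard inner product.\<close>

definition ad_adj :: "(real^('n::finite) \<Rightarrow> real^'n \<Rightarrow> real^'n) \<Rightarrow> real^'n \<Rightarrow> real^'n \<Rightarrow> real^'n" where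
  "ad_adj br X Y = (\<chi> j. Y \<bullet> br X (axis j 1))"

text \<open>Levi-Civita connection on left-invariant fields (Koszul formula).\<close>
definition lc_conn :: "(real^('n::finite) \<Rightarrow> real^'n \<Rightarrow> real^'n) \<Rightarrow> real^'n \<Rightarrow> real^'n \<Rightarrow> real^'n" where
  "lc_conn br X Y = (1/2) *\<^sub>R (br X Y - ad_adj br X Y - ad_adj br Y X)"

definition curv :: "(real^('n::finite) \<Rightarrow> real^'n \<Rightarrow> real^'n) \<Rightarrow> real^'n \<Rightarrow> real^'n \<Rightarrow> real^'n \<Rightarrow> real^'n" where
  "curv br X Y Z = lc_conn br X (lc_conn br Y Z) - lc_conn br Y (lc_conn br X Z) - lc_conn br (br X Y) Z"

definition ricci_form :: "(real^('n::finite) \<Rightarrow> real^'n \<Rightarrow> real^'n) \<Rightarrow> real^'n \<Rightarrow> real^'n \<Rightarrow> real" where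
  "ricci_form br Y Z = (\<Sum>i\<in>UNIV. curv br (axis i 1) Y Z \<bullet> axis i 1)"

definition ricci_op :: "(real^('n::finite) \<Rightarrow> real^'n \<Rightarrow> real^'n) \<Rightarrow> real^'n \<Rightarrow> real^'n" where
  "ricci_op br Y = (\<chi> j. ricci_form br Y (axis j 1))"

definition is_derivation :: "(real^('n::finite) \<Rightarrow> real^'n \<Rightarrow> real^'n) \<Rightarrow> (real^'n \<Rightarrow> real^'n) \<Rightarrow> bool" where
  "is_derivation br D \<longleftrightarrow> linear D \<and> (\<forall>X Y. D (br X Y) = br (D X) Y + br X (D Y))"

definition algebraic_ricci_soliton :: "(real^('n::finite) \<Rightarrow> real^'n \<Rightarrow> real^'n) \<Rightarrow> bool" where
  "algebraic_ricci_soliton br \<longleftrightarrow>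
     (\<exists>c D. is_derivation br D \<and> (\<forall>X. ricci_op br X = c *\<^sub>R X + D X))"

text \<open>The bracket of the five-dimensional algebra n, extended bilinearly; E_k = axis k 1.\<close>
definition nbr :: "real \<Rightarrow> real \<Rightarrow> real \<Rightarrow> real \<Rightarrow> real \<Rightarrow> real^5 \<Rightarrow> real^5 \<Rightarrow> real^5" where
  "nbr m u v w x X Y =
     (let a12 = X$1 * Y$2 - X$2 * Y$1;
          a13 = X$1 * Y$3 - X$3 * Y$1;
          a14 = X$1 * Y$4 - X$4 * Y$1
      in (m * a12) *\<^sub>R axis 3 1 + (u * a12) *\<^sub>R axis 5 1
         + (v * a13) *\<^sub>R axis 4 1 + (w * a13) *\<^sub>R axis 5 1
         + (x * a14) *\<^sub>R axis 5 1)"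

definition diag5 :: "real \<Rightarrow> real \<Rightarrow> real \<Rightarrow> real \<Rightarrow> real \<Rightarrow> real^5 \<Rightarrow> real^5" where
  "diag5 a1 a2 a3 a4 a5 X =
     (X$1 * a1) *\<^sub>R axis 1 1 + (X$2 * a2) *\<^sub>R axis 2 1 + (X$3 * a3) *\<^sub>R axis 3 1
     + (X$4 * a4) *\<^sub>R axis 4 1 + (X$5 * a5) *\<^sub>R axis 5 1"

end

theory Submission
  imports Defs
begin
lemma exhaust_5:
  fixes x :: 5
  shows "x = 1 \<or> x = 2 \<or> x = 3 \<or> x = 4 \<or> x = 5"
proof (induct x)
  case (of_int z)
  then have "z = 0 \<or> z = 1 \<or> z = 2 \<or> z = 3 \<or> z = 4" by fastforce
  then show ?case by auto
qed
lemma UNIV_5: "UNIV = {1, 2, 3, 4, 5::5}"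
  using exhaust_5 by auto
lemma sum_5: "sum f (UNIV::5 set) = f 1 + f 2 + f 3 + f 4 + f 5"
  unfolding UNIV_5 by (simp add: ac_simps)
lemma forall_5: "(\<forall>i::5. P i) \<longleftrightarrow> P 1 \<and> P 2 \<and> P 3 \<and> P 4 \<and> P 5"
  by (metis exhaust_5)
lemma inner5: "(X::real^5) \<bullet> Y = (X$1)*Y$1 + (X$2)*Y$2 + (X$3)*Y$3 + (X$4)*Y$4 + (X$5)*Y$5"
  by (simp add: inner_vec_def sum_5)
lemma lc_comp: "lc_conn br X Y $ j = 1/2*(br X Y $ j - Y \<bullet> br X (axis j 1) - X \<bullet> br Y (axis j 1))"
  by (simp add: lc_conn_def ad_adj_def)
lemma nbr_comp:
  "nbr m u v w x X Y $ 1 = 0"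
  "nbr m u v w x X Y $ 2 = 0"
  "nbr m u v w x X Y $ 3 = m * ((X$1) * Y$2 - (X$2) * Y$1)"
  "nbr m u v w x X Y $ 4 = v * ((X$1) * Y$3 - (X$3) * Y$1)"
  "nbr m u v w x X Y $ 5 = u * ((X$1) * Y$2 - (X$2) * Y$1) + w * ((X$1) * Y$3 - (X$3) * Y$1) + x * ((X$1) * Y$4 - (X$4) * Y$1)"
  by (simp_all add: nbr_def Let_def axis_def)
lemmas rsimps = ricci_op_def ricci_form_def sum_5 curv_def inner5 lc_comp nbr_comp axis_def
lemma ric1: "ricci_op (nbr m u v w x) X $ 1 = -(m^2+u^2+v^2+w^2+x^2)/2 * (X$1)"
  by (simp add: rsimps) (simp add: field_simps power2_eq_square)
lemma ric2: "ricci_op (nbr m u v w x) X $ 2 = -(m^2+u^2)/2 * (X$2) - u*w/2*(X$3) - u*x/2*(X$4)"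
  by (simp add: rsimps) (simp add: field_simps power2_eq_square)
lemma ric3: "ricci_op (nbr m u v w x) X $ 3 = - u*w/2*(X$2) + (m^2-v^2-w^2)/2*(X$3) - w*x/2*(X$4) + m*u/2*(X$5)"
  by (simp add: rsimps) (simp add: field_simps power2_eq_square)
lemma ric4: "ricci_op (nbr m u v w x) X $ 4 = - u*x/2*(X$2) - w*x/2*(X$3) + (v^2-x^2)/2*(X$4) + (v * w)/2*(X$5)"
  by (simp add: rsimps) (simp add: field_simps power2_eq_square)
lemma ric5: "ricci_op (nbr m u v w x) X $ 5 = m*u/2*(X$3) + (v * w)/2*(X$4) + (u^2+w^2+x^2)/2*(X$5)"
  by (simp add: rsimps) (simp add: field_simps power2_eq_square)

lemmas ric_all = ric1 ric2 ric3 ric4 ric5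

lemma diag5_comp:
  "diag5 a1 a2 a3 a4 a5 X $ 1 = (X$1) * a1"
  "diag5 a1 a2 a3 a4 a5 X $ 2 = (X$2) * a2"
  "diag5 a1 a2 a3 a4 a5 X $ 3 = (X$3) * a3"
  "diag5 a1 a2 a3 a4 a5 X $ 4 = (X$4) * a4"
  "diag5 a1 a2 a3 a4 a5 X $ 5 = (X$5) * a5"
  by (simp_all add: diag5_def axis_def)

lemma vec5_eq: "((A::real^5) = B) \<longleftrightarrow> A$1 = B$1 \<and> A$2 = B$2 \<and> A$3 = B$3 \<and> A$4 = B$4 \<and> A$5 = B$5"
  by (simp add: vec_eq_iff forall_5)

theorem mainTheorem4:
  fixes m v x w u :: real
  assumes "m > 0" and "v > 0" and "x > 0" and "w \<ge> 0"
  shows "(algebraic_ricci_soliton (nbr m u v w x) \<longleftrightarrow>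
            (x = m \<and> u = 0 \<and> w = 0 \<and> v = 2 / sqrt 3 * m))
       \<and> (algebraic_ricci_soliton (nbr m u v w x) \<longrightarrow>
            (\<forall>c D. is_derivation (nbr m u v w x) D \<and>
                   (\<forall>X. ricci_op (nbr m u v w x) X = c *\<^sub>R X + D X) \<longrightarrow>
               c = - 2 * m\<^sup>2 \<and>
               D = diag5 (m\<^sup>2 / 3) (3 / 2 * m\<^sup>2) (11 / 6 * m\<^sup>2) (13 / 6 * m\<^sup>2) (5 / 2 * m\<^sup>2)))"
proof -
  have fwd: "x = m \<and> u = 0 \<and> w = 0 \<and> v = 2 / sqrt 3 * m \<and> c = - 2 * m\<^sup>2 \<and>
               D = diag5 (m\<^sup>2 / 3) (3 / 2 * m\<^sup>2) (11 / 6 * m\<^sup>2) (13 / 6 * m\<^sup>2) (5 / 2 * m\<^sup>2)"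
    if der: "is_derivation (nbr m u v w x) D"
      and ric: "\<forall>X. ricci_op (nbr m u v w x) X = c *\<^sub>R X + D X" for c D
  proof -
    have Dbr: "\<And>X Y. D (nbr m u v w x X Y) = nbr m u v w x (D X) Y + nbr m u v w x X (D Y)"
      using der by (simp add: is_derivation_def)
    have Dx: "\<And>X. D X = ricci_op (nbr m u v w x) X - c *\<^sub>R X"
      using ric by simp
    have key: "\<And>X Y k. (ricci_op (nbr m u v w x) (nbr m u v w x X Y) - c *\<^sub>R nbr m u v w x X Y) $ k
       = (nbr m u v w x (ricci_op (nbr m u v w x) X - c *\<^sub>R X) Y
          + nbr m u v w x X (ricci_op (nbr m u v w x) Y - c *\<^sub>R Y)) $ k"
      using Dbr Dx by metis
    have "m*u* v = 0" using key[of "axis 1 1" "axis 5 1" 4]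
      by (simp add: ric_all nbr_comp axis_def algebra_simps)
    then have u0: "u = 0" using assms by simp
    have "v * w * x = 0" using key[of "axis 1 1" "axis 5 1" 5]
      by (simp add: ric_all nbr_comp axis_def algebra_simps u0)
    then have w0: "w = 0" using assms by simp
    have mnz: "m \<noteq> 0" and vnz: "v \<noteq> 0" and xnz: "x \<noteq> 0" using assms by auto
    have "m * ((m^2 - v^2)/2 - c) = m * (-(m^2+v^2+x^2)/2 - m^2/2 - 2*c)"
      using key[of "axis 1 1" "axis 2 1" 3]
      by (simp add: ric_all nbr_comp axis_def u0 w0 algebra_simps del: mult_cancel_left mult_cancel_right)
    then have F1: "(m^2 - v^2)/2 - c = -(m^2+v^2+x^2)/2 - m^2/2 - 2*c" using mnz by simp
    have "v * ((v^2 - x^2)/2 - c) = v * (-(m^2+v^2+x^2)/2 + (m^2-v^2)/2 - 2*c)"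
      using key[of "axis 1 1" "axis 3 1" 4]
      by (simp add: ric_all nbr_comp axis_def u0 w0 algebra_simps del: mult_cancel_left mult_cancel_right)
    then have F2: "(v^2 - x^2)/2 - c = -(m^2+v^2+x^2)/2 + (m^2-v^2)/2 - 2*c" using vnz by simp
    have "x * (x^2/2 - c) = x * (-(m^2+v^2+x^2)/2 + (v^2-x^2)/2 - 2*c)"
      using key[of "axis 1 1" "axis 4 1" 5]
      by (simp add: ric_all nbr_comp axis_def u0 w0 algebra_simps del: mult_cancel_left mult_cancel_right)
    then have F3: "x^2/2 - c = -(m^2+v^2+x^2)/2 + (v^2-x^2)/2 - 2*c" using xnz by simp
    have Fa: "2*c = -3*m^2 - x^2" using F1 by (simp add: field_simps)
    have Fb: "2*c = -3* v^2" using F2 by (simp add: field_simps)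
    have Fc: "2*c = -(m^2) - 3*x^2" using F3 by (simp add: field_simps)
    have xx: "x^2 = m^2" using Fa Fb Fc by linarith
    have vv: "v^2 = 4*m^2/3" using Fa Fb Fc by linarith
    have cc: "c = -2*m^2" using Fa Fb Fc by linarith
    have xm: "x = m" using xx assms by (simp add: power2_eq_iff)
    have "(2 / sqrt 3 * m)^2 = 4*m^2/3" by (simp add: power_mult_distrib power_divide)
    then have "v^2 = (2 / sqrt 3 * m)^2" using vv by simp
    then have vm: "v = 2 / sqrt 3 * m" using assms
      by (metis less_eq_real_def power2_eq_imp_eq divide_nonneg_pos mult_nonneg_nonneg real_sqrt_gt_zero zero_le_numeral zero_less_numeral)
    have Deq: "D = diag5 (m\<^sup>2 / 3) (3 / 2 * m\<^sup>2) (11 / 6 * m\<^sup>2) (13 / 6 * m\<^sup>2) (5 / 2 * m\<^sup>2)"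
    proof
      fix X
      show "D X = diag5 (m\<^sup>2 / 3) (3 / 2 * m\<^sup>2) (11 / 6 * m\<^sup>2) (13 / 6 * m\<^sup>2) (5 / 2 * m\<^sup>2) X"
        unfolding Dx vec5_eq
        by (simp add: ric_all diag5_comp u0 w0 xm vv cc)
    qed
    show ?thesis using xm u0 w0 vm cc Deq by simp
  qed
  have bwd: "algebraic_ricci_soliton (nbr m u v w x)"
    if h: "x = m \<and> u = 0 \<and> w = 0 \<and> v = 2 / sqrt 3 * m"
  proof -
    have xm: "x = m" and u0: "u = 0" and w0: "w = 0" using h by auto
    have vv: "v^2 = 4*m^2/3" using h by (simp add: power_mult_distrib power_divide)
    let ?D = "diag5 (m\<^sup>2 / 3) (3 / 2 * m\<^sup>2) (11 / 6 * m\<^sup>2) (13 / 6 * m\<^sup>2) (5 / 2 * m\<^sup>2)"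
    have lin: "linear ?D"
      by (rule linearI) (simp_all add: vec5_eq diag5_comp algebra_simps)
    have "is_derivation (nbr m u v w x) ?D"
      unfolding is_derivation_def
      using lin by (simp add: vec5_eq diag5_comp nbr_comp u0 w0 xm) (simp add: algebra_simps)
    moreover have "\<forall>X. ricci_op (nbr m u v w x) X = (-2*m^2) *\<^sub>R X + ?D X"
      by (simp add: vec5_eq ric_all diag5_comp u0 w0 xm vv)
    ultimately show ?thesis unfolding algebraic_ricci_soliton_def by blast
  qed
  show ?thesis
    using fwd bwd unfolding algebraic_ricci_soliton_def by blast
qed

end
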